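(* Let $\mathcal{S}$ be a finite thick generalized quadrangle of order $(s,t)$ with a group $G$ of automorphisms acting regularly on the points. Let $g\in G$ with $g^2\ne 1$, and let $P$ be a point with $P\sim P^g$. Let $\ell_1:=PP^{g^{-1}}$ and $\ell_2:=PP^g$. Then $\ell_1,\ell_2$ are all the lines of $\mathcal{L}_1(g)\cup\mathcal{L}_2(g)$ passing through $P$. Moreover: (1) if $P,P^g,P^{g^{-1}}$ are collinear, then $\ell_1=\ell_2$ and this line lies in $\mathcal{L}_1(g)$; (2) if $P,P^g,P^{g^{-1}}$ are not collinear, then $\ell_1,\ell_2$ are distinct and both lie in $\mathcal{L}_2(g)$.
   Context: A generalized quadrangle of order $(s,t)$: each line has $s+1$ points, each point is on $t+1$ lines, and for each non-incident point-line pair $(P,\ell)$ there is a unique point on $\ell$ collinear with $P$; thick means $\min\{s,t\}\ge2$. $P\sim Q$ means distinct collinear points; for lines, $\ell\sim m$ means distinct concurrent lines. $XY$ denotes the line through distinct collinear points $X,Y$. $\mathcal{L}_1(g)$ is the set of lines fixed by $g$, and $\mathcal{L}_2(g):=\{\ell:\ \ell^g\sim\ell\}$. *)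

theory Defs
  imports Main
begin

definition collinear :: "'p set \<Rightarrow> 'l set \<Rightarrow> ('p \<Rightarrow> 'l \<Rightarrow> bool) \<Rightarrow> 'p \<Rightarrow> 'p \<Rightarrow> bool" where
  "collinear Pts Lns I P Q \<longleftrightarrow> P \<in> Pts \<and> Q \<in> Pts \<and> P \<noteq> Q \<and> (\<exists>l\<in>Lns. I P l \<and> I Q l)"

definition concurrent :: "'p set \<Rightarrow> 'l set \<Rightarrow> ('p \<Rightarrow> 'l \<Rightarrow> bool) \<Rightarrow> 'l \<Rightarrow> 'l \<Rightarrow> bool" where
  "concurrent Pts Lns I l m \<longleftrightarrow> l \<in> Lns \<and> m \<in> Lns \<and> l \<noteq> m \<and> (\<exists>P\<in>Pts. I P l \<and> I P m)"

definition join :: "'p set \<Rightarrow> 'l set \<Rightarrow> ('p \<Rightarrow> 'l \<Rightarrow> bool) \<Rightarrow> 'p \<Rightarrow> 'p \<Rightarrow> 'l" where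
  "join Pts Lns I X Y = (THE l. l \<in> Lns \<and> I X l \<and> I Y l)"

definition gen_quad :: "'p set \<Rightarrow> 'l set \<Rightarrow> ('p \<Rightarrow> 'l \<Rightarrow> bool) \<Rightarrow> nat \<Rightarrow> nat \<Rightarrow> bool" where
  "gen_quad Pts Lns I s t \<longleftrightarrow>
     finite Pts \<and> finite Lns \<and>
     (\<forall>l\<in>Lns. card {P\<in>Pts. I P l} = s + 1) \<and>
     (\<forall>P\<in>Pts. card {l\<in>Lns. I P l} = t + 1) \<and>
     (\<forall>P\<in>Pts. \<forall>Q\<in>Pts. P \<noteq> Q \<longrightarrow> card {l\<in>Lns. I P l \<and> I Q l} \<le> 1) \<and>
     (\<forall>P\<in>Pts. \<forall>l\<in>Lns. \<not> I P l \<longrightarrow>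
        (\<exists>!Q. Q \<in> Pts \<and> I Q l \<and> collinear Pts Lns I P Q))"

definition thick_gen_quad :: "'p set \<Rightarrow> 'l set \<Rightarrow> ('p \<Rightarrow> 'l \<Rightarrow> bool) \<Rightarrow> nat \<Rightarrow> nat \<Rightarrow> bool" where
  "thick_gen_quad Pts Lns I s t \<longleftrightarrow> gen_quad Pts Lns I s t \<and> min s t \<ge> 2"

text \<open>An automorphism is a pair (action on points, action on lines) of bijections
  preserving incidence; to make them a group under composition we take them to be the
  identity outside the point/line sets.\<close>
definition automorphism :: "'p set \<Rightarrow> 'l set \<Rightarrow> ('p \<Rightarrow> 'l \<Rightarrow> bool) \<Rightarrow> ('p \<Rightarrow> 'p) \<times> ('l \<Rightarrow> 'l) \<Rightarrow> bool" where
  "automorphism Pts Lns I g \<longleftrightarrow>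
     bij_betw (fst g) Pts Pts \<and> bij_betw (snd g) Lns Lns \<and>
     (\<forall>x. x \<notin> Pts \<longrightarrow> fst g x = x) \<and> (\<forall>l. l \<notin> Lns \<longrightarrow> snd g l = l) \<and>
     (\<forall>P\<in>Pts. \<forall>l\<in>Lns. I P l \<longleftrightarrow> I (fst g P) (snd g l))"

definition aut_group :: "'p set \<Rightarrow> 'l set \<Rightarrow> ('p \<Rightarrow> 'l \<Rightarrow> bool) \<Rightarrow> (('p \<Rightarrow> 'p) \<times> ('l \<Rightarrow> 'l)) set \<Rightarrow> bool" where
  "aut_group Pts Lns I G \<longleftrightarrow>
     (\<forall>g\<in>G. automorphism Pts Lns I g) \<and> (id, id) \<in> G \<and>
     (\<forall>g\<in>G. \<forall>h\<in>G. (fst h \<circ> fst g, snd h \<circ> snd g) \<in> G) \<and>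
     (\<forall>g\<in>G. (inv (fst g), inv (snd g)) \<in> G)"

definition acts_regularly_on_points :: "'p set \<Rightarrow> (('p \<Rightarrow> 'p) \<times> ('l \<Rightarrow> 'l)) set \<Rightarrow> bool" where
  "acts_regularly_on_points Pts G \<longleftrightarrow> (\<forall>P\<in>Pts. \<forall>Q\<in>Pts. \<exists>!g. g \<in> G \<and> fst g P = Q)"

definition L1 :: "'l set \<Rightarrow> ('p \<Rightarrow> 'p) \<times> ('l \<Rightarrow> 'l) \<Rightarrow> 'l set" where
  "L1 Lns g = {l \<in> Lns. snd g l = l}"

definition L2 :: "'p set \<Rightarrow> 'l set \<Rightarrow> ('p \<Rightarrow> 'l \<Rightarrow> bool) \<Rightarrow> ('p \<Rightarrow> 'p) \<times> ('l \<Rightarrow> 'l) \<Rightarrow> 'l set" where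
  "L2 Pts Lns I g = {l \<in> Lns. concurrent Pts Lns I (snd g l) l}"

end

theory Submission
  imports Defs
begin

lemma gq_uniq:
  assumes "gen_quad Pts Lns I s t" "X \<in> Pts" "Y \<in> Pts" "X \<noteq> Y"
    "l \<in> Lns" "m \<in> Lns" "I X l" "I Y l" "I X m" "I Y m"
  shows "l = m"
proof -
  have f: "finite Lns" and c: "card {l\<in>Lns. I X l \<and> I Y l} \<le> 1"
    using assms unfolding gen_quad_def by auto
  have "finite {l\<in>Lns. I X l \<and> I Y l}" using f by auto
  moreover have "l \<in> {l\<in>Lns. I X l \<and> I Y l}" "m \<in> {l\<in>Lns. I X l \<and> I Y l}" using assms by auto
  ultimately show ?thesis using c by (metis card_le_Suc0_iff_eq One_nat_def)
qed

lemma join_eq: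
  assumes "gen_quad Pts Lns I s t" "X \<in> Pts" "Y \<in> Pts" "X \<noteq> Y"
    "l \<in> Lns" "I X l" "I Y l"
  shows "join Pts Lns I X Y = l"
  unfolding join_def
  apply (rule the_equality)
  using assms apply blast
  using gq_uniq[OF assms(1-4)] assms by blast

theorem lemma3p6:
  fixes Pts :: "'p set" and Lns :: "'l set" and I :: "'p \<Rightarrow> 'l \<Rightarrow> bool"
    and s t :: nat and G :: "(('p \<Rightarrow> 'p) \<times> ('l \<Rightarrow> 'l)) set"
    and g :: "('p \<Rightarrow> 'p) \<times> ('l \<Rightarrow> 'l)" and P :: 'p
  assumes gq: "thick_gen_quad Pts Lns I s t"
    and grp: "aut_group Pts Lns I G"
    and reg: "acts_regularly_on_points Pts G"
    and gG: "g \<in> G"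
    and g2: "\<not> (fst g \<circ> fst g = id \<and> snd g \<circ> snd g = id)"
    and P: "P \<in> Pts"
    and coll: "collinear Pts Lns I P (fst g P)"
  shows "(let l1 = join Pts Lns I P (inv (fst g) P); l2 = join Pts Lns I P (fst g P) in
           {l \<in> L1 Lns g \<union> L2 Pts Lns I g. I P l} = {l1, l2} \<and>
           ((\<exists>l\<in>Lns. I P l \<and> I (fst g P) l \<and> I (inv (fst g) P) l)
              \<longrightarrow> l1 = l2 \<and> l1 \<in> L1 Lns g) \<and>
           (\<not> (\<exists>l\<in>Lns. I P l \<and> I (fst g P) l \<and> I (inv (fst g) P) l)
              \<longrightarrow> l1 \<noteq> l2 \<and> l1 \<in> L2 Pts Lns I g \<and> l2 \<in> L2 Pts Lns I g))"
proof -
  have GQ: "gen_quad Pts Lns I s t" using gq unfolding thick_gen_quad_def by auto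
  have aut: "automorphism Pts Lns I g" using grp gG unfolding aut_group_def by auto
  define f where "f = fst g"
  define h where "h = snd g"
  have bf: "bij_betw f Pts Pts" and bh: "bij_betw h Lns Lns"
    and fo: "\<forall>x. x \<notin> Pts \<longrightarrow> f x = x"
    and inc: "\<And>X l. X \<in> Pts \<Longrightarrow> l \<in> Lns \<Longrightarrow> I X l \<longleftrightarrow> I (f X) (h l)"
    using aut unfolding automorphism_def f_def h_def by auto
  have fP: "f P \<in> Pts" using bf P by (simp add: bij_betw_apply)
  have PfP: "P \<noteq> f P" using coll unfolding collinear_def f_def by auto
  define R where "R = inv f P"
  have "\<exists>x\<in>Pts. f x = P" using bf P by (metis bij_betw_def imageE)
  then have fR: "f R = P" unfolding R_def inv_def by (metis (mono_tags, lifting) someI)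
  have R: "R \<in> Pts" using fR fo P by metis
  have RP: "R \<noteq> P" using fR PfP by auto
  obtain l2 where l2: "l2 \<in> Lns" "I P l2" "I (f P) l2"
    using coll unfolding collinear_def f_def by auto
  obtain l1 where l1: "l1 \<in> Lns" "h l1 = l2" using bh l2(1) by (metis bij_betw_def imageE)
  have l1i: "I R l1" "I P l1" using inc[OF R l1(1)] inc[OF P l1(1)] fR l1 l2 by auto
  have j1: "join Pts Lns I P (inv (fst g) P) = l1"
    using join_eq[OF GQ P R RP[symmetric] l1(1) l1i(2) l1i(1)] unfolding R_def f_def by simp
  have j2: "join Pts Lns I P (fst g P) = l2"
    using join_eq[OF GQ P fP PfP l2] unfolding f_def by simp
  have hl2: "h l2 \<in> Lns" "I (f P) (h l2)" using bh l2 inc[OF P l2(1)] by (auto simp: bij_betw_apply)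
  have hinj: "inj_on h Lns" using bh bij_betw_def by auto
  have mem1: "l1 \<in> L1 Lns g \<union> L2 Pts Lns I g"
  proof (cases "l1 = l2")
    case True then show ?thesis using l1 unfolding L1_def h_def by auto
  next
    case False then show ?thesis using l1 l2 l1i P unfolding L2_def concurrent_def h_def by auto
  qed
  have L2l2: "l2 \<in> L2 Pts Lns I g" if ne: "l1 \<noteq> l2"
  proof -
    have "h l2 \<noteq> l2" using ne hinj l1 l2 by (metis inj_on_def)
    then show ?thesis using hl2 l2 fP unfolding L2_def concurrent_def h_def f_def by auto
  qed
  have mem2: "l2 \<in> L1 Lns g \<union> L2 Pts Lns I g"
  proof (cases "l1 = l2")
    case True then show ?thesis using l1 unfolding L1_def h_def by auto
  next
    case False then show ?thesis using L2l2 by auto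
  qed
  have sub: "l = l1 \<or> l = l2" if lm: "l \<in> L1 Lns g \<union> L2 Pts Lns I g" "I P l" for l
  proof -
    have lL: "l \<in> Lns" using lm unfolding L1_def L2_def by auto
    show ?thesis
    proof (cases "I (f P) l")
      case True then show ?thesis using gq_uniq[OF GQ P fP PfP lL l2(1) lm(2) True l2(2,3)] by auto
    next
      case nf: False
      have "l \<notin> L1 Lns g"
      proof
        assume "l \<in> L1 Lns g"
        then have "h l = l" unfolding L1_def h_def by auto
        then show False using inc[OF P lL] lm nf by auto
      qed
      then have "l \<in> L2 Pts Lns I g" using lm by auto
      then obtain Q where Q: "Q \<in> Pts" "I Q (h l)" "I Q l" and hlL: "h l \<in> Lns"
        unfolding L2_def concurrent_def h_def by auto
      have "Q \<noteq> f P" using Q nf by auto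
      then have cQ: "collinear Pts Lns I (f P) Q" using Q hlL inc[OF P lL] lm
        unfolding collinear_def using fP by auto
      have cP: "collinear Pts Lns I (f P) P" using l2 fP P PfP unfolding collinear_def by auto
      have "\<exists>!Q. Q \<in> Pts \<and> I Q l \<and> collinear Pts Lns I (f P) Q"
        using GQ fP lL nf unfolding gen_quad_def by blast
      then have "Q = P" using cQ cP Q P lm by blast
      then have "I P (h l)" using Q by simp
      then have "I R l" using inc[OF R lL] fR by simp
      then show ?thesis using gq_uniq[OF GQ P R RP[symmetric] lL l1(1) lm(2) _ l1i(2,1)] by auto
    qed
  qed
  have A: "{l \<in> L1 Lns g \<union> L2 Pts Lns I g. I P l} = {l1, l2}"
    using sub mem1 mem2 l1i l2 by auto
  have B: "l1 = l2 \<and> l1 \<in> L1 Lns g" if ex: "\<exists>l\<in>Lns. I P l \<and> I (fst g P) l \<and> I (inv (fst g) P) l"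
  proof -
    obtain l where l: "l \<in> Lns" "I P l" "I (f P) l" "I R l" using ex by (auto simp: f_def R_def)
    have "l = l2" using gq_uniq[OF GQ P fP PfP l(1) l2(1) l(2,3) l2(2,3)] .
    moreover have "l = l1" using gq_uniq[OF GQ P R RP[symmetric] l(1) l1(1) l(2,4) l1i(2,1)] .
    ultimately show ?thesis using l1 unfolding L1_def h_def by auto
  qed
  have C: "l1 \<noteq> l2 \<and> l1 \<in> L2 Pts Lns I g \<and> l2 \<in> L2 Pts Lns I g"
    if "\<not> (\<exists>l\<in>Lns. I P l \<and> I (fst g P) l \<and> I (inv (fst g) P) l)"
  proof -
    have ne: "l1 \<noteq> l2" using that l1 l1i l2 unfolding f_def R_def by auto
    then have "l1 \<in> L2 Pts Lns I g" using l1 l2 l1i P unfolding L2_def concurrent_def h_def by auto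
    then show ?thesis using ne L2l2 by auto
  qed
  show ?thesis unfolding j1 j2 Let_def using A B C by blast
qed

end
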